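(* Let $\mathcal E=\{p_1,\dots,p_n\}\subseteq\mathbb K[x,y_1,\dots,y_n]$ (regarded as a vector of polynomials), let $\bar\sigma=(\sigma_1,\dots,\sigma_n)\in\Sigma^n$ be a stream solution of $\mathcal E$, and let $\bar r_0=\bar\sigma(0)$. Then $$\big(\nabla^{\eth}_{\bar y}\mathcal E\big)(X,\bar r_0,\bar\sigma)\cdot\bar\sigma'^{T}+\Big(\frac{\eth\mathcal E}{\eth x}(X,\bar\sigma)\Big)^{T}=0 .$$
   Context: Streams $\Sigma=\mathbb K^\omega$ over a field $\mathbb K$ of characteristic $0$ with pointwise sum, convolution product $(\sigma\times\tau)(i)=\sum_{j=0}^{i}\sigma(j)\tau(i-j)$, $X=(0,1,0,\dots)$, scalars as $(r,0,0,\dots)$, stream derivative $\sigma'(i)=\sigma(i+1)$. A stream solution of a finite set $\mathcal E$ of polynomials is $\bar\sigma\in\Sigma^n$ with $p(X,\bar\sigma)=0$ for all $p\in\mathcal E$ (substituting $x\mapsto X$, $y_i\mapsto\sigma_i$). Syntactic stream derivative of $p\in\mathbb K[x,\bar y]$: with new indeterminates $y_{0i},y_i'$, $y_0:=x$, $y_{00}:=0$, order $y_0<\dots<y_n$, $\min(m)$ the least variable of monomial $m\ne1$: $(1)'=0$, $(x)'=1$, $(y_i)'=y_i'$, $(y_im)'=y_i'm+y_{0i}(m)'$ when $m\ne1$, $y_i=\min(y_im)$, extended linearly. Writing uniquely $p'=q_0+\sum_i q_iy_i'$ with $q_j\in\mathbb K[x,\bar y_0,\bar y]$, set $\frac{\eth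 p}{\eth x}:=q_0$ (a polynomial in $x,\bar y$ only) and $\frac{\eth p}{\eth y_i}:=q_i$. $\nabla^{\eth}_{\bar y}\mathcal E$ is the $n\times n$ matrix whose $i$-th row is $(\frac{\eth p_i}{\eth y_1},\dots,\frac{\eth p_i}{\eth y_n})$, and $\frac{\eth\mathcal E}{\eth x}:=(\frac{\eth p_1}{\eth x},\dots,\frac{\eth p_n}{\eth x})$. Evaluation at $(X,\bar r_0,\bar\sigma)$ substitutes $x\mapsto X$, $y_{0i}\mapsto r_{0i}$, $y_i\mapsto\sigma_i$. *)

theory Defs
  imports "HOL-Library.Multiset" "HOL-Library.Poly_Mapping"
          "HOL-Computational_Algebra.Formal_Power_Series"
begin

text \<open>Streams K^omega with pointwise sum and convolution product are the formal power
series 'a fps (fps_nth gives the i-th entry, fps_X is X, fps_const r is the scalar r).\<close>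

definition sderiv :: "'a fps \<Rightarrow> 'a fps" where
  "sderiv \<sigma> = Abs_fps (\<lambda>i. fps_nth \<sigma> (i + 1))"

text \<open>Polynomials in K[x,y_1,...,y_n]: variable 0 is x, variable i (i >= 1) is y_i;
monomials are multisets of variables, polynomials finitely supported coefficient maps.\<close>

type_synonym 'a mpoly = "nat multiset \<Rightarrow>\<^sub>0 'a"

definition pvars :: "'a::zero mpoly \<Rightarrow> nat set" where
  "pvars p = (\<Union>m\<in>Poly_Mapping.keys p. set_mset m)"

text \<open>Extended variables: x, y_i, y_{0i}, y_i'.\<close>
datatype evar = VX | VY nat | VY0 nat | VYd nat

type_synonym 'a epoly = "evar multiset \<Rightarrow>\<^sub>0 'a"

definition evar_of :: "nat \<Rightarrow> evar" where
  "evar_of i = (if i = 0 then VX else VY i)"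

definition emono :: "nat list \<Rightarrow> 'a::comm_ring_1 epoly" where
  "emono vs = Poly_Mapping.single (mset (map evar_of vs)) 1"

definition dvar :: "nat \<Rightarrow> 'a::comm_ring_1 epoly" where
  "dvar i = (if i = 0 then Poly_Mapping.single {#} 1 else Poly_Mapping.single {#VYd i#} 1)"

definition y0var :: "nat \<Rightarrow> 'a::comm_ring_1 epoly" where
  "y0var i = (if i = 0 then 0 else Poly_Mapping.single {#VY0 i#} 1)"

text \<open>Syntactic stream derivative of a monomial, given as the list of its variables
sorted increasingly (so the head is min(m)).\<close>
fun dmono :: "nat list \<Rightarrow> 'a::comm_ring_1 epoly" where
  "dmono [] = 0"
| "dmono [v] = dvar v"
| "dmono (v # w # vs) = dvar v * emono (w # vs) + y0var v * dmono (w # vs)"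

definition sderiv_poly :: "'a::comm_ring_1 mpoly \<Rightarrow> 'a epoly" where
  "sderiv_poly p = (\<Sum>m\<in>Poly_Mapping.keys p.
      Poly_Mapping.single {#} (Poly_Mapping.lookup p m) * dmono (sorted_list_of_multiset m))"

definition is_EYd :: "evar \<Rightarrow> bool" where
  "is_EYd v = (\<exists>i. v = VYd i)"

text \<open>Writing p' = q_0 + sum_i q_i y_i': q_0 collects the monomials without any y',
q_i the monomials containing y_i' exactly once and no other y' (with y_i' removed).\<close>
definition eth_x :: "'a::comm_ring_1 mpoly \<Rightarrow> 'a epoly" where
  "eth_x p = (let q = sderiv_poly p in
     (\<Sum>m\<in>Poly_Mapping.keys q. if (\<forall>v\<in>#m. \<not> is_EYd v) then Poly_Mapping.single m (Poly_Mapping.lookup q m) else 0))"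

definition eth_y :: "'a::comm_ring_1 mpoly \<Rightarrow> nat \<Rightarrow> 'a epoly" where
  "eth_y p i = (let q = sderiv_poly p in
     (\<Sum>m\<in>Poly_Mapping.keys q. if count m (VYd i) = 1 \<and> (\<forall>v\<in>#m. is_EYd v \<longrightarrow> v = VYd i)
        then Poly_Mapping.single (m - {#VYd i#}) (Poly_Mapping.lookup q m) else 0))"

definition peval :: "('v \<Rightarrow> 'a::comm_ring_1 fps) \<Rightarrow> ('v multiset \<Rightarrow>\<^sub>0 'a) \<Rightarrow> 'a fps" where
  "peval env p = (\<Sum>m\<in>Poly_Mapping.keys p. fps_const (Poly_Mapping.lookup p m) * prod_mset (image_mset env m))"

definition env_base :: "(nat \<Rightarrow> 'a::comm_ring_1 fps) \<Rightarrow> nat \<Rightarrow> 'a fps" where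
  "env_base \<sigma> k = (if k = 0 then fps_X else \<sigma> k)"

text \<open>Substitution x := X, y_{0i} := r_{0i}, y_i := sigma_i (y_i' does not occur).\<close>
fun env_ext :: "(nat \<Rightarrow> 'a::comm_ring_1 fps) \<Rightarrow> (nat \<Rightarrow> 'a) \<Rightarrow> evar \<Rightarrow> 'a fps" where
  "env_ext \<sigma> r0 VX = fps_X"
| "env_ext \<sigma> r0 (VY i) = \<sigma> i"
| "env_ext \<sigma> r0 (VY0 i) = fps_const (r0 i)"
| "env_ext \<sigma> r0 (VYd i) = 0"

definition stream_solution :: "nat \<Rightarrow> (nat \<Rightarrow> 'a::comm_ring_1 mpoly) \<Rightarrow> (nat \<Rightarrow> 'a fps) \<Rightarrow> bool" where
  "stream_solution n P \<sigma> = (\<forall>i\<in>{1..n}. peval (env_base \<sigma>) (P i) = 0)"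

end

theory Submission
  imports Defs
begin

lemma sderiv_nth[simp]: "fps_nth (sderiv a) i = fps_nth a (Suc i)" by (simp add: sderiv_def)
lemma sderiv_add: "sderiv (a + b) = sderiv a + sderiv b" by (rule fps_ext) simp
lemma sderiv_zero[simp]: "sderiv 0 = 0" by (rule fps_ext) simp
lemma sderiv_one[simp]: "sderiv 1 = 0" by (rule fps_ext) simp
lemma sderiv_X[simp]: "sderiv fps_X = 1" by (rule fps_ext) (simp add: fps_one_nth)
lemma sderiv_cmult: "sderiv (fps_const (c::'a::comm_ring_1) * a) = fps_const c * sderiv a" by (rule fps_ext) simp
lemma sderiv_sum: "sderiv (\<Sum>i\<in>I. f i) = (\<Sum>i\<in>I. sderiv (f i))"
  by (induction I rule: infinite_finite_induct) (auto simp: sderiv_add)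
lemma sderiv_mult: "sderiv ((a::'a::comm_ring_1 fps) * b) = sderiv a * b + fps_const (fps_nth a 0) * sderiv b"
proof (rule fps_ext)
  fix i
  have "fps_nth (sderiv (a*b)) i = (\<Sum>k=0..Suc i. fps_nth a k * fps_nth b (Suc i - k))" by (simp add: fps_mult_nth)
  also have "\<dots> = fps_nth a 0 * fps_nth b (Suc i) + (\<Sum>k=0..i. fps_nth a (Suc k) * fps_nth b (i - k))"
    by (subst sum.atLeast0_atMost_Suc_shift) simp
  also have "\<dots> = fps_nth (sderiv a * b) i + fps_nth (fps_const (fps_nth a 0) * sderiv b) i"
    by (simp add: fps_mult_nth[of "sderiv a"])
  finally show "fps_nth (sderiv (a * b)) i = fps_nth (sderiv a * b + fps_const (fps_nth a 0) * sderiv b) i"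
    by simp
qed

lemma peval_superset:
  assumes "finite S" "Poly_Mapping.keys p \<subseteq> S"
  shows "peval env p = (\<Sum>m\<in>S. fps_const (Poly_Mapping.lookup p m) * prod_mset (image_mset env m))"
  unfolding peval_def
  by (rule sum.mono_neutral_left) (use assms in \<open>auto simp: in_keys_iff\<close>)

lemma peval_add: "peval env (p + q) = peval env p + peval env q"
proof -
  let ?S = "Poly_Mapping.keys p \<union> Poly_Mapping.keys q"
  have "peval env (p+q) = (\<Sum>m\<in>?S. fps_const (Poly_Mapping.lookup (p+q) m) * prod_mset (image_mset env m))"
    by (rule peval_superset) (auto dest: keys_add[THEN subsetD])
  also have "\<dots> = (\<Sum>m\<in>?S. fps_const (Poly_Mapping.lookup p m) * prod_mset (image_mset env m))
     + (\<Sum>m\<in>?S. fps_const (Poly_Mapping.lookup q m) * prod_mset (image_mset env m))"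
    unfolding sum.distrib[symmetric] by (rule sum.cong[OF refl]) (simp only: lookup_add fps_const_add[symmetric] distrib_right)
  also have "\<dots> = peval env p + peval env q"
    using peval_superset[of ?S p env] peval_superset[of ?S q env] by simp
  finally show ?thesis .
qed

lemma peval_zero[simp]: "peval env 0 = 0" by (simp add: peval_def)

lemma peval_sum: "peval env (\<Sum>i\<in>I. f i) = (\<Sum>i\<in>I. peval env (f i))"
  by (induction I rule: infinite_finite_induct) (auto simp: peval_add)

lemma peval_single: "peval env (Poly_Mapping.single m c) = fps_const c * prod_mset (image_mset env m)"
  by (simp add: peval_def)

lemma pm_expand: "p = (\<Sum>m\<in>Poly_Mapping.keys p. Poly_Mapping.single m (Poly_Mapping.lookup p m))"
proof (rule poly_mapping_eqI)
  fix k
  show "Poly_Mapping.lookup p k = Poly_Mapping.lookup (\<Sum>m\<in>Poly_Mapping.keys p. Poly_Mapping.single m (Poly_Mapping.lookup p m)) k"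
    by (simp add: lookup_sum lookup_single when_def in_keys_iff)
qed

lemma peval_single_mult:
  "peval env (Poly_Mapping.single m c * q) = fps_const c * prod_mset (image_mset env m) * peval env q"
proof -
  have "Poly_Mapping.single m c * q = (\<Sum>k\<in>Poly_Mapping.keys q. Poly_Mapping.single m c * Poly_Mapping.single k (Poly_Mapping.lookup q k))"
    by (subst pm_expand[of q]) (simp add: sum_distrib_left)
  also have "\<dots> = (\<Sum>k\<in>Poly_Mapping.keys q. Poly_Mapping.single (m + k) (c * Poly_Mapping.lookup q k))"
    by (simp add: mult_single)
  finally have eq: "Poly_Mapping.single m c * q = (\<Sum>k\<in>Poly_Mapping.keys q. Poly_Mapping.single (m + k) (c * Poly_Mapping.lookup q k))" .
  have t: "fps_const (c * Poly_Mapping.lookup q k) * prod_mset (image_mset env (m + k)) =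
    fps_const c * prod_mset (image_mset env m) * (fps_const (Poly_Mapping.lookup q k) * prod_mset (image_mset env k))" for k
    by (simp only: fps_const_mult[symmetric] image_mset_union prod_mset.union mult_ac)
  show ?thesis
    unfolding eq peval_sum peval_single t
    by (simp only: peval_def sum_distrib_left)
qed

fun env_full :: "(nat \<Rightarrow> 'a::comm_ring_1 fps) \<Rightarrow> (nat \<Rightarrow> 'a) \<Rightarrow> evar \<Rightarrow> 'a fps" where
  "env_full \<sigma> r0 VX = fps_X"
| "env_full \<sigma> r0 (VY i) = \<sigma> i"
| "env_full \<sigma> r0 (VY0 i) = fps_const (r0 i)"
| "env_full \<sigma> r0 (VYd i) = sderiv (\<sigma> i)"

lemma env_full_evar_of[simp]: "env_full \<sigma> r0 (evar_of v) = env_base \<sigma> v"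
  by (simp add: evar_of_def env_base_def)

lemma peval_emono: "peval (env_full \<sigma> r0) (emono vs :: 'a::field epoly) = prod_list (map (env_base \<sigma>) vs)"
  by (induction vs) (simp_all add: emono_def peval_single del: single_one)

lemma dmono_sem:
  fixes \<sigma> :: "nat \<Rightarrow> 'a::field fps"
  assumes "\<forall>v\<in>set vs. v \<noteq> 0 \<longrightarrow> r0 v = fps_nth (\<sigma> v) 0"
  shows "peval (env_full \<sigma> r0) (dmono vs :: 'a epoly) = sderiv (prod_list (map (env_base \<sigma>) vs))"
  using assms
proof (induction vs rule: dmono.induct)
  case 1
  then show ?case by simp
next
  case (2 v)
  then show ?case by (simp add: dvar_def peval_single env_base_def del: single_one)
next
  case (3 v w vs)
  have IH: "peval (env_full \<sigma> r0) (dmono (w # vs) :: 'a epoly) = sderiv (prod_list (map (env_base \<sigma>) (w # vs)))"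
    using 3 by simp
  have d: "peval (env_full \<sigma> r0) (dvar v * emono (w # vs) :: 'a epoly) = sderiv (env_base \<sigma> v) * prod_list (map (env_base \<sigma>) (w # vs))"
    by (simp add: dvar_def peval_single_mult peval_emono env_base_def del: single_one)
  have y: "peval (env_full \<sigma> r0) (y0var v * dmono (w # vs) :: 'a epoly) = fps_const (fps_nth (env_base \<sigma> v) 0) * sderiv (prod_list (map (env_base \<sigma>) (w # vs)))"
    using 3(2) by (simp add: y0var_def peval_single_mult IH env_base_def del: single_one)
  show ?case
    by (simp only: dmono.simps peval_add d y list.map prod_list.Cons sderiv_mult)
qed

lemma prod_mset_list: "prod_mset (image_mset f (mset xs)) = prod_list (map f xs)"
  by (induction xs) simp_all

lemma prod_mset_sorted: "prod_mset (image_mset f m) = prod_list (map f (sorted_list_of_multiset m))"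
  using prod_mset_list[of f "sorted_list_of_multiset m"] by simp

lemma sderiv_poly_sem:
  fixes p :: "'a::field mpoly"
  assumes "pvars p \<subseteq> {0..n}" "\<forall>j\<in>{1..n}. r0 j = fps_nth (\<sigma> j) 0"
  shows "peval (env_full \<sigma> r0) (sderiv_poly p) = sderiv (peval (env_base \<sigma>) p)"
proof -
  have "peval (env_full \<sigma> r0) (sderiv_poly p) = (\<Sum>m\<in>Poly_Mapping.keys p.
      fps_const (Poly_Mapping.lookup p m) * peval (env_full \<sigma> r0) (dmono (sorted_list_of_multiset m) :: 'a epoly))"
    unfolding sderiv_poly_def peval_sum by (simp add: peval_single_mult del: single_one)
  also have "\<dots> = (\<Sum>m\<in>Poly_Mapping.keys p.
      fps_const (Poly_Mapping.lookup p m) * sderiv (prod_list (map (env_base \<sigma>) (sorted_list_of_multiset m))))"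
  proof (rule sum.cong[OF refl])
    fix m assume m: "m \<in> Poly_Mapping.keys p"
    have "\<forall>v\<in>set (sorted_list_of_multiset m). v \<noteq> 0 \<longrightarrow> r0 v = fps_nth (\<sigma> v) 0"
    proof (intro ballI impI)
      fix v assume "v \<in> set (sorted_list_of_multiset m)" "v \<noteq> 0"
      then have "v \<in> pvars p" using m by (auto simp: pvars_def)
      with assms \<open>v \<noteq> 0\<close> show "r0 v = fps_nth (\<sigma> v) 0" by auto
    qed
    then show "fps_const (Poly_Mapping.lookup p m) * peval (env_full \<sigma> r0) (dmono (sorted_list_of_multiset m) :: 'a epoly) =
      fps_const (Poly_Mapping.lookup p m) * sderiv (prod_list (map (env_base \<sigma>) (sorted_list_of_multiset m)))"
      by (simp add: dmono_sem)
  qed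
  also have "\<dots> = sderiv (peval (env_base \<sigma>) p)"
    by (simp add: peval_def sderiv_sum sderiv_cmult prod_mset_sorted)
  finally show ?thesis .
qed

definition nofree :: "evar multiset \<Rightarrow> bool" where
  "nofree m = (\<forall>v\<in>#m. \<not> is_EYd v)"
definition goodj :: "nat \<Rightarrow> evar multiset \<Rightarrow> bool" where
  "goodj j m = (count m (VYd j) = 1 \<and> (\<forall>v\<in>#m. is_EYd v \<longrightarrow> v = VYd j))"
definition good :: "nat \<Rightarrow> evar multiset \<Rightarrow> bool" where
  "good n m = (nofree m \<or> (\<exists>j\<in>{1..n}. goodj j m))"

lemma good_add: assumes "nofree a" "good n b" shows "good n (a + b)"
proof (cases "nofree b")
  case True then show ?thesis using assms(1) by (auto simp: good_def nofree_def)
next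
  case False
  then obtain j where j: "j \<in> {1..n}" "goodj j b" using assms(2) good_def by blast
  have "count a (VYd j) = 0" using assms(1) by (auto simp: nofree_def is_EYd_def count_eq_zero_iff)
  then have "goodj j (a + b)" using j(2) assms(1) by (auto simp: goodj_def nofree_def)
  then show ?thesis using j(1) good_def by blast
qed

lemma good_add': "good n a \<Longrightarrow> nofree b \<Longrightarrow> good n (a + b)"
  by (subst add.commute) (rule good_add)

lemma keys_emono: "Poly_Mapping.keys (emono vs :: 'a::field epoly) \<subseteq> {m. nofree m}"
proof -
  have "nofree (mset (map evar_of vs))" by (auto simp: nofree_def evar_of_def is_EYd_def)
  then show ?thesis by (simp add: emono_def)
qed

lemma keys_y0var: "Poly_Mapping.keys (y0var v :: 'a::field epoly) \<subseteq> {m. nofree m}"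
  by (simp add: y0var_def nofree_def is_EYd_def)

lemma keys_dvar: "v \<le> n \<Longrightarrow> Poly_Mapping.keys (dvar v :: 'a::field epoly) \<subseteq> {m. good n m}"
proof (cases "v = 0")
  case True then show ?thesis by (simp add: dvar_def good_def nofree_def del: single_one)
next
  case False
  assume "v \<le> n"
  then have "goodj v {#VYd v#}" "v \<in> {1..n}" using False by (auto simp: goodj_def is_EYd_def)
  then show ?thesis using False by (auto simp: dvar_def good_def simp del: single_one)
qed

lemma keys_dmono: "set vs \<subseteq> {0..n} \<Longrightarrow> Poly_Mapping.keys (dmono vs :: 'a::field epoly) \<subseteq> {m. good n m}"
proof (induction vs rule: dmono.induct)
  case 1 then show ?case by simp
next
  case (2 v) then show ?case using keys_dvar by auto
next
  case (3 v w vs)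
  have IH: "Poly_Mapping.keys (dmono (w # vs) :: 'a epoly) \<subseteq> {m. good n m}" using 3 by simp
  have a: "Poly_Mapping.keys (dvar v * emono (w # vs) :: 'a epoly) \<subseteq> {m. good n m}"
  proof
    fix x assume "x \<in> Poly_Mapping.keys (dvar v * emono (w # vs) :: 'a epoly)"
    then obtain a b where x: "x = a + b" "a \<in> Poly_Mapping.keys (dvar v :: 'a epoly)" "b \<in> Poly_Mapping.keys (emono (w # vs) :: 'a epoly)"
      using keys_mult[of "dvar v :: 'a epoly" "emono (w # vs)"] by blast
    have "v \<le> n" using 3(2) by simp
    then have "good n a" using x(2) keys_dvar[of v n] by blast
    moreover have "nofree b" using x(3) keys_emono[of "w # vs"] by blast
    ultimately show "x \<in> {m. good n m}" using x(1) good_add' by blast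
  qed
  have b: "Poly_Mapping.keys (y0var v * dmono (w # vs) :: 'a epoly) \<subseteq> {m. good n m}"
  proof
    fix x assume "x \<in> Poly_Mapping.keys (y0var v * dmono (w # vs) :: 'a epoly)"
    then obtain a b where x: "x = a + b" "a \<in> Poly_Mapping.keys (y0var v :: 'a epoly)" "b \<in> Poly_Mapping.keys (dmono (w # vs) :: 'a epoly)"
      using keys_mult[of "y0var v :: 'a epoly" "dmono (w # vs)"] by blast
    have "nofree a" using x(2) keys_y0var[of v] by blast
    moreover have "good n b" using x(3) IH by blast
    ultimately show "x \<in> {m. good n m}" using x(1) good_add by blast
  qed
  have "Poly_Mapping.keys (dmono (v # w # vs) :: 'a epoly) \<subseteq> Poly_Mapping.keys (dvar v * emono (w # vs) :: 'a epoly) \<union> Poly_Mapping.keys (y0var v * dmono (w # vs) :: 'a epoly)"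
    by (simp only: dmono.simps keys_add)
  then show ?case using a b by blast
qed

lemma keys_sderiv_poly:
  fixes p :: "'a::field mpoly"
  assumes "pvars p \<subseteq> {0..n}"
  shows "Poly_Mapping.keys (sderiv_poly p) \<subseteq> {m. good n m}"
proof -
  have "Poly_Mapping.keys (Poly_Mapping.single {#} (Poly_Mapping.lookup p m) * dmono (sorted_list_of_multiset m) :: 'a epoly) \<subseteq> {m. good n m}"
    if m: "m \<in> Poly_Mapping.keys p" for m
  proof -
    have "set (sorted_list_of_multiset m) \<subseteq> {0..n}" using m assms by (auto simp: pvars_def)
    then have "Poly_Mapping.keys (dmono (sorted_list_of_multiset m) :: 'a epoly) \<subseteq> {m. good n m}"
      by (rule keys_dmono)
    moreover have "Poly_Mapping.keys (Poly_Mapping.single {#} (Poly_Mapping.lookup p m) :: 'a epoly) \<subseteq> {{#}}"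
      by simp
    ultimately show ?thesis
    proof (intro subsetI)
      fix x assume d: "Poly_Mapping.keys (dmono (sorted_list_of_multiset m) :: 'a epoly) \<subseteq> {m. good n m}"
        and s: "Poly_Mapping.keys (Poly_Mapping.single {#} (Poly_Mapping.lookup p m) :: 'a epoly) \<subseteq> {{#}}"
        and x: "x \<in> Poly_Mapping.keys (Poly_Mapping.single {#} (Poly_Mapping.lookup p m) * dmono (sorted_list_of_multiset m) :: 'a epoly)"
      from x obtain a b where ab: "x = a + b" "a \<in> Poly_Mapping.keys (Poly_Mapping.single {#} (Poly_Mapping.lookup p m) :: 'a epoly)"
        "b \<in> Poly_Mapping.keys (dmono (sorted_list_of_multiset m) :: 'a epoly)"
        using keys_mult[of "Poly_Mapping.single {#} (Poly_Mapping.lookup p m) :: 'a epoly" "dmono (sorted_list_of_multiset m)"] by blast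
      have "a = {#}" using ab(2) s by blast
      then show "x \<in> {m. good n m}" using ab(1,3) d by auto
    qed
  qed
  moreover have "Poly_Mapping.keys (sderiv_poly p) \<subseteq> (\<Union>m\<in>Poly_Mapping.keys p. Poly_Mapping.keys (Poly_Mapping.single {#} (Poly_Mapping.lookup p m) * dmono (sorted_list_of_multiset m) :: 'a epoly))"
    unfolding sderiv_poly_def by (rule keys_sum)
  ultimately show ?thesis by blast
qed

lemma goodj_in: "goodj j m \<Longrightarrow> VYd j \<in># m"
proof -
  assume "goodj j m"
  then have "count m (VYd j) = 1" by (simp add: goodj_def)
  then show ?thesis by (metis not_in_iff one_neq_zero)
qed

lemma env_agree: "nofree m \<Longrightarrow> image_mset (env_full \<sigma> r0) m = image_mset (env_ext \<sigma> r0) m"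
  unfolding nofree_def
proof (rule image_mset_cong)
  fix v assume "\<forall>v\<in>#m. \<not> is_EYd v" "v \<in># m"
  then have "\<not> is_EYd v" by blast
  then show "env_full \<sigma> r0 v = env_ext \<sigma> r0 v" by (cases v) (auto simp: is_EYd_def)
qed

lemma goodj_unique: "goodj j m \<Longrightarrow> goodj k m \<Longrightarrow> j = k"
proof -
  assume j: "goodj j m" and k: "goodj k m"
  have "VYd j \<in># m" using j by (rule goodj_in)
  moreover have "is_EYd (VYd j)" by (simp add: is_EYd_def)
  ultimately have "VYd j = VYd k" using k by (simp add: goodj_def)
  then show "j = k" by simp
qed

lemma goodj_not_nofree: "goodj j m \<Longrightarrow> \<not> nofree m"
proof -
  assume j: "goodj j m"
  have "VYd j \<in># m" using j by (rule goodj_in)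
  moreover have "is_EYd (VYd j)" by (simp add: is_EYd_def)
  ultimately show "\<not> nofree m" by (auto simp: nofree_def)
qed

lemma goodj_rest: "goodj j m \<Longrightarrow> nofree (m - {#VYd j#})"
proof -
  assume j: "goodj j m"
  show "nofree (m - {#VYd j#})" unfolding nofree_def
  proof
    fix v assume v: "v \<in># m - {#VYd j#}"
    show "\<not> is_EYd v"
    proof
      assume e: "is_EYd v"
      have "v \<in># m" using v by (rule in_diffD)
      then have "v = VYd j" using e j by (simp add: goodj_def)
      moreover have "count (m - {#VYd j#}) (VYd j) = 0" using j by (simp add: goodj_def)
      then have "VYd j \<notin># m - {#VYd j#}" by (simp only: not_in_iff)
      ultimately show False using v by simp
    qed
  qed
qed

lemma term_decomp:
  fixes c :: "'a::field"
  assumes "good n m"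
  shows "fps_const c * prod_mset (image_mset (env_full \<sigma> r0) m) =
    (\<Sum>j=1..n. if goodj j m then fps_const c * prod_mset (image_mset (env_ext \<sigma> r0) (m - {#VYd j#})) * sderiv (\<sigma> j) else 0)
    + (if nofree m then fps_const c * prod_mset (image_mset (env_ext \<sigma> r0) m) else 0)"
proof (cases "nofree m")
  case True
  then have "\<not> goodj j m" for j using goodj_not_nofree by blast
  then show ?thesis using True by (simp add: env_agree)
next
  case False
  then obtain j0 where j0: "j0 \<in> {1..n}" "goodj j0 m" using assms good_def by blast
  have s: "(\<Sum>j=1..n. if goodj j m then fps_const c * prod_mset (image_mset (env_ext \<sigma> r0) (m - {#VYd j#})) * sderiv (\<sigma> j) else 0)
     = (\<Sum>j=1..n. if j = j0 then fps_const c * prod_mset (image_mset (env_ext \<sigma> r0) (m - {#VYd j#})) * sderiv (\<sigma> j) else 0)"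
  proof (rule sum.cong[OF refl])
    fix x
    have "goodj x m \<longleftrightarrow> x = j0" using j0(2) goodj_unique by blast
    then show "(if goodj x m then fps_const c * prod_mset (image_mset (env_ext \<sigma> r0) (m - {#VYd x#})) * sderiv (\<sigma> x) else 0) =
      (if x = j0 then fps_const c * prod_mset (image_mset (env_ext \<sigma> r0) (m - {#VYd x#})) * sderiv (\<sigma> x) else 0)"
      by simp
  qed
  have "VYd j0 \<in># m" using j0(2) by (rule goodj_in)
  then have m: "m = add_mset (VYd j0) (m - {#VYd j0#})" by simp
  have "prod_mset (image_mset (env_full \<sigma> r0) m) = sderiv (\<sigma> j0) * prod_mset (image_mset (env_full \<sigma> r0) (m - {#VYd j0#}))"
    by (subst m) simp
  also have "\<dots> = sderiv (\<sigma> j0) * prod_mset (image_mset (env_ext \<sigma> r0) (m - {#VYd j0#}))"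
    using env_agree[OF goodj_rest[OF j0(2)], of \<sigma> r0] by simp
  finally show ?thesis using False s j0(1) by (simp add: mult_ac)
qed

lemma peval_if: "peval env (if b then p else 0) = (if b then peval env p else 0)"
  by simp

lemma if_mult0: "(if b then (x::'a::semiring_0) else 0) * y = (if b then x * y else 0)"
  by simp

lemma decomp:
  fixes q :: "'a::field epoly"
  assumes "Poly_Mapping.keys q \<subseteq> {m. good n m}"
  shows "peval (env_full \<sigma> r0) q =
    (\<Sum>j=1..n. peval (env_ext \<sigma> r0) (\<Sum>m\<in>Poly_Mapping.keys q. if goodj j m then Poly_Mapping.single (m - {#VYd j#}) (Poly_Mapping.lookup q m) else 0) * sderiv (\<sigma> j))
    + peval (env_ext \<sigma> r0) (\<Sum>m\<in>Poly_Mapping.keys q. if nofree m then Poly_Mapping.single m (Poly_Mapping.lookup q m) else 0)"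
proof -
  have "peval (env_full \<sigma> r0) q = (\<Sum>m\<in>Poly_Mapping.keys q.
    (\<Sum>j=1..n. if goodj j m then fps_const (Poly_Mapping.lookup q m) * prod_mset (image_mset (env_ext \<sigma> r0) (m - {#VYd j#})) * sderiv (\<sigma> j) else 0)
    + (if nofree m then fps_const (Poly_Mapping.lookup q m) * prod_mset (image_mset (env_ext \<sigma> r0) m) else 0))"
    unfolding peval_def by (rule sum.cong[OF refl], rule term_decomp) (use assms in blast)
  also have "\<dots> = (\<Sum>j=1..n. \<Sum>m\<in>Poly_Mapping.keys q. if goodj j m then fps_const (Poly_Mapping.lookup q m) * prod_mset (image_mset (env_ext \<sigma> r0) (m - {#VYd j#})) * sderiv (\<sigma> j) else 0)
    + (\<Sum>m\<in>Poly_Mapping.keys q. if nofree m then fps_const (Poly_Mapping.lookup q m) * prod_mset (image_mset (env_ext \<sigma> r0) m) else 0)"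
    by (simp only: sum.distrib sum.swap[of _ "Poly_Mapping.keys q"])
  also have "\<dots> = (\<Sum>j=1..n. peval (env_ext \<sigma> r0) (\<Sum>m\<in>Poly_Mapping.keys q. if goodj j m then Poly_Mapping.single (m - {#VYd j#}) (Poly_Mapping.lookup q m) else 0) * sderiv (\<sigma> j))
    + peval (env_ext \<sigma> r0) (\<Sum>m\<in>Poly_Mapping.keys q. if nofree m then Poly_Mapping.single m (Poly_Mapping.lookup q m) else 0)"
    by (simp only: peval_sum peval_if peval_single sum_distrib_right if_mult0)
  finally show ?thesis .
qed


theorem lemma3p6:
  fixes n :: nat
    and P :: "nat \<Rightarrow> 'a::field_char_0 mpoly"
    and \<sigma> :: "nat \<Rightarrow> 'a fps"
    and r0 :: "nat \<Rightarrow> 'a"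
  assumes "\<forall>i\<in>{1..n}. pvars (P i) \<subseteq> {0..n}"
    and "stream_solution n P \<sigma>"
    and "\<forall>j\<in>{1..n}. r0 j = fps_nth (\<sigma> j) 0"
  shows "\<forall>i\<in>{1..n}.
     (\<Sum>j=1..n. peval (env_ext \<sigma> r0) (eth_y (P i) j) * sderiv (\<sigma> j))
       + peval (env_ext \<sigma> r0) (eth_x (P i)) = 0"
proof (intro ballI)
  fix i assume i: "i \<in> {1..n}"
  have pv: "pvars (P i) \<subseteq> {0..n}" using assms(1) i by blast
  have sol: "peval (env_base \<sigma>) (P i) = 0" using assms(2) i by (simp add: stream_solution_def)
  have z: "peval (env_full \<sigma> r0) (sderiv_poly (P i)) = 0"
    using sderiv_poly_sem[OF pv assms(3)] sol by simp
  have ey: "eth_y (P i) j = (\<Sum>m\<in>Poly_Mapping.keys (sderiv_poly (P i)). if goodj j m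
        then Poly_Mapping.single (m - {#VYd j#}) (Poly_Mapping.lookup (sderiv_poly (P i)) m) else 0)" for j
    by (simp add: eth_y_def Let_def goodj_def)
  have ex: "eth_x (P i) = (\<Sum>m\<in>Poly_Mapping.keys (sderiv_poly (P i)). if nofree m
        then Poly_Mapping.single m (Poly_Mapping.lookup (sderiv_poly (P i)) m) else 0)"
    by (simp add: eth_x_def Let_def nofree_def)
  show "(\<Sum>j=1..n. peval (env_ext \<sigma> r0) (eth_y (P i) j) * sderiv (\<sigma> j))
       + peval (env_ext \<sigma> r0) (eth_x (P i)) = 0"
    unfolding ey ex using decomp[OF keys_sderiv_poly[OF pv], of \<sigma> r0] z by simp
qed

end
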